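(* Let $(\mathcal N,\mathcal M,\mathbf w,\mathbf v)$ be a chore-allocation instance with $w_1\ge w_i$ for all $i$. Define new weights $w'_i=w_1/2^{p_i}$ where $p_i=\lfloor\log_{1/2}(w_i/w_1)\rfloor$ (so $w_i\le w'_i<2w_i$), keeping agents, items and cost functions unchanged. Then for every agent $a_i$, the weighted maximin share of $a_i$ in the new instance is at most twice the weighted maximin share of $a_i$ in the original instance.
   Context: A chore-allocation instance consists of agents $\mathcal N=\{a_1,\dots,a_n\}$, a finite set $\mathcal M$ of indivisible items, positive weights $w_1,\dots,w_n$, and additive cost functions $v_i:2^{\mathcal M}\to\mathbb R_{\ge0}$. An allocation is an ordered partition $(A_1,\dots,A_n)$ of $\mathcal M$ (bundles may be empty), $\mathcal A$ the set of all allocations. The weighted maximin share of $a_i$ (with respect to weights $w$) is $\mathsf{WMMS}_i=w_i\cdot\min_{(A_1,\dots,A_n)\in\mathcal A}\max_{j\in[n]}\frac{v_i(A_j)}{w_j}$. *)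

theory Defs
  imports Complex_Main
begin

text \<open>Agents are indexed 0..<n (agent 0 plays the role of a_1).
  Items form a finite set M. Additive cost of agent i for a bundle S is the sum of
  the item costs v i x over x in S.\<close>

definition cost :: "(nat \<Rightarrow> 'b \<Rightarrow> real) \<Rightarrow> nat \<Rightarrow> 'b set \<Rightarrow> real" where
  "cost v i S = (\<Sum>x\<in>S. v i x)"

definition allocations :: "nat \<Rightarrow> 'b set \<Rightarrow> (nat \<Rightarrow> 'b set) set" where
  "allocations n M = {A. (\<Union>j\<in>{0..<n}. A j) = M
       \<and> (\<forall>j\<in>{0..<n}. \<forall>k\<in>{0..<n}. j \<noteq> k \<longrightarrow> A j \<inter> A k = {})
       \<and> (\<forall>j. j \<ge> n \<longrightarrow> A j = {})}"

definition WMMS :: "nat \<Rightarrow> 'b set \<Rightarrow> (nat \<Rightarrow> real) \<Rightarrow> (nat \<Rightarrow> 'b \<Rightarrow> real) \<Rightarrow> nat \<Rightarrow> real" where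
  "WMMS n M w v i = w i * (INF A\<in>allocations n M. (MAX j\<in>{0..<n}. cost v i (A j) / w j))"

end

theory Submission
  imports Defs
begin

lemma wbounds:
  fixes a b :: real and q :: int
  assumes a: "a > 0" and ab: "a \<le> b" and q: "q = \<lfloor>log (1/2) (a / b)\<rfloor>"
  shows "a \<le> b / 2 powr q \<and> b / 2 powr q < 2 * a"
proof -
  have b: "b > 0" using a ab by linarith
  define r where "r = a / b"
  have r: "r > 0" using a b by (simp add: r_def)
  have lg: "log (1/2) r = - log 2 r"
    by (simp add: log_def ln_div)
  have q1: "q \<le> - log 2 r" using q lg r_def by (metis of_int_floor_le)
  have q2: "- log 2 r < q + 1" using q lg r_def
    by (metis floor_correct)
  have e: "2 powr (- log 2 r) = 1 / r" using r
    by (simp add: powr_minus divide_inverse)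
  have "2 powr q \<le> 1 / r" using q1 e by (metis powr_mono one_le_numeral)
  hence "r \<le> 1 / 2 powr q" using r
    by (simp add: field_simps)
  hence 1: "a \<le> b / 2 powr q" using b by (simp add: r_def field_simps)
  have "1 / r < 2 powr (q + 1)" using q2 e by (metis powr_less_mono one_less_numeral_iff semiring_norm(76))
  hence "1 / r < 2 * 2 powr q" by (simp add: powr_add)
  hence "1 / (2 * 2 powr q) < r" using r
    by (simp add: field_simps)
  hence 2: "b / 2 powr q < 2 * a" using b by (simp add: r_def field_simps)
  show ?thesis using 1 2 by blast
qed

theorem mainTheorem2:
  fixes n :: nat and M :: "'b set" and w :: "nat \<Rightarrow> real" and v :: "nat \<Rightarrow> 'b \<Rightarrow> real"
    and w' :: "nat \<Rightarrow> real" and p :: "nat \<Rightarrow> int"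
  assumes n_pos: "n \<ge> 1"
    and finM: "finite M"
    and w_pos: "\<forall>i<n. w i > 0"
    and v_nonneg: "\<forall>i<n. \<forall>x\<in>M. v i x \<ge> 0"
    and w0_max: "\<forall>i<n. w i \<le> w 0"
    and p_def: "\<forall>i<n. p i = \<lfloor>log (1/2) (w i / w 0)\<rfloor>"
    and w'_def: "\<forall>i<n. w' i = w 0 / 2 powr (real_of_int (p i))"
  shows "\<forall>i<n. WMMS n M w' v i \<le> 2 * WMMS n M w v i"
proof (intro allI impI)
  fix i assume i: "i < n"
  have wb: "w j \<le> w' j \<and> w' j < 2 * w j" if "j < n" for j
    using wbounds[of "w j" "w 0" "p j"] that w_pos w0_max p_def w'_def by auto
  define f where "f = (\<lambda>A. MAX j\<in>{0..<n}. cost v i (A j) / w j)"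
  define g where "g = (\<lambda>A. MAX j\<in>{0..<n}. cost v i (A j) / w' j)"
  have ne: "{0..<n} \<noteq> {}" using n_pos by auto
  have costnn: "cost v i (A j) \<ge> 0" if "A \<in> allocations n M" "j < n" for A j
  proof -
    have "A j \<subseteq> M" using that unfolding allocations_def by auto
    thus ?thesis unfolding cost_def using v_nonneg i by (meson subsetD sum_nonneg)
  qed
  have gf: "g A \<le> f A" if A: "A \<in> allocations n M" for A
    unfolding f_def g_def
  proof (rule Max.boundedI)
    fix y assume "y \<in> (\<lambda>j. cost v i (A j) / w' j) ` {0..<n}"
    then obtain j where j: "j < n" and y: "y = cost v i (A j) / w' j" by auto
    have "y \<le> cost v i (A j) / w j" unfolding y
      using costnn[OF A j] wb[OF j] w_pos j by (intro divide_left_mono) auto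
    also have "\<dots> \<le> (MAX j\<in>{0..<n}. cost v i (A j) / w j)"
      using j by (intro Max_ge) auto
    finally show "y \<le> (MAX j\<in>{0..<n}. cost v i (A j) / w j)" .
  qed (use ne in auto)
  have gnn: "g A \<ge> 0" if A: "A \<in> allocations n M" for A
  proof -
    have "0 \<le> cost v i (A 0) / w' 0" using costnn[OF A, of 0] n_pos wb[of 0] w_pos by auto
    also have "\<dots> \<le> g A" unfolding g_def using n_pos by (intro Max_ge) auto
    finally show ?thesis .
  qed
  have fnn: "f A \<ge> 0" if A: "A \<in> allocations n M" for A
    using gnn[OF A] gf[OF A] by linarith
  have allne: "allocations n M \<noteq> {}"
  proof -
    have "(\<lambda>j. if j = 0 then M else {}) \<in> allocations n M"
      unfolding allocations_def using n_pos by auto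
    thus ?thesis by blast
  qed
  have bg: "bdd_below (g ` allocations n M)" using gnn by (intro bdd_belowI[of _ 0]) auto
  have le1: "(INF A\<in>allocations n M. g A) \<le> (INF A\<in>allocations n M. f A)"
    using allne bg gf by (intro cINF_mono) auto
  have fge: "(INF A\<in>allocations n M. f A) \<ge> 0"
    using allne fnn by (intro cINF_greatest) auto
  have wi: "0 < w' i" "w' i \<le> 2 * w i" using wb[OF i] w_pos i by auto
  have "WMMS n M w' v i = w' i * (INF A\<in>allocations n M. g A)"
    unfolding WMMS_def g_def ..
  also have "\<dots> \<le> w' i * (INF A\<in>allocations n M. f A)"
    using le1 wi by (intro mult_left_mono) auto
  also have "\<dots> \<le> (2 * w i) * (INF A\<in>allocations n M. f A)"
    using fge wi by (intro mult_right_mono) auto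
  also have "\<dots> = 2 * WMMS n M w v i" unfolding WMMS_def f_def by simp
  finally show "WMMS n M w' v i \<le> 2 * WMMS n M w v i" .
qed

end
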